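(* Let $\mathcal C$ be a Clifford circuit with linear outcome code $\mathcal O(\mathcal C)$, let $F$ be a fault operator and $u\in\mathcal O(\mathcal C)^\perp$. Then $\sum_{j=1}^m u_j\,[\overrightarrow F_{\ell_j-0.5},S_j]\equiv[F,\overleftarrow{F(u)}]\pmod 2$; that is, the faults $F$ flip the value of the outcome check $u$ if and only if $[F,\overleftarrow{F(u)}]=1$.
   Context: A Clifford circuit on $n$ qubits is a finite sequence of operations, each a unitary Clifford gate or the measurement of a Hermitian $n$-qubit Pauli, each with a level in $\{1,2,\dots\}$; operations of equal level have disjoint supports and levels are nondecreasing; depth $\Delta$ = maximal level. In circuit order the $j$-th measurement measures $S_j$ at level $\ell_j$ ($j=1,\dots,m$); outcome $o_j=0$ for eigenvalue $+1$, $1$ for $-1$. The outcome code $\mathcal O(\mathcal C)$ is the set of outcome bit-strings occurring with nonzero probability for some input state; $\perp$ refers to $(u|v)=\sum u_iv_i\bmod 2$. $\overline{\mathcal P}_N$ is the $N$-qubit Pauli group modulo phases; $[P,Q]\in\mathbb Z_2$ is $0$ iff $P,Q$ commute. $U_\ell$ is the product of unitary gates of level $\ell$ (identity if none). Fault operators $F\in\overline{\mathcal P}_{n(\Delta+1)}$ act on qubits $(\ell+0.5,q)$, $0\le\ell\le\Delta$, $1\le q\le n$, with level components $F_{\ell+0.5}$; $\eta_{\ell+0.5}(P)$ is $P$ at level $\ell+0.5$ and $I$ elsewhere. Cumulant $\overrightarrow F$: start with $F$; for $\ell=1,\dots,\Delta$ replace $\overrightarrow F_{\ell+0.5}$ by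 $\overrightarrow F_{\ell+0.5}\cdot U_\ell\overrightarrow F_{\ell-0.5}U_\ell^{-1}$. Back-cumulant $\overleftarrow F$: start with $F$; for $\ell=\Delta,\dots,1$ replace $\overleftarrow F_{\ell-0.5}$ by $\overleftarrow F_{\ell-0.5}\cdot U_\ell^{-1}\overleftarrow F_{\ell+0.5}U_\ell$. $F(u)=\prod_j\eta_{\ell_j-0.5}(S_j^{u_j})$. The faults $F$ flip the $j$-th outcome iff $[\overrightarrow F_{\ell_j-0.5},S_j]=1$, and flip the check $u$ iff the sum of the flips over $j$ with $u_j=1$ is $1$ mod 2. *)

theory Defs
  imports Complex_Main "Jordan_Normal_Form.Matrix"
begin

(* computational basis states |b>, b < 2^n; bit q of b is the state of qubit q *)
definition qbit :: "nat \<Rightarrow> nat \<Rightarrow> bool" where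
  "qbit b q = odd (b div 2 ^ q)"

(* |b> with the bits in x flipped (only qubits q < n are used) *)
definition flipx :: "nat \<Rightarrow> (nat \<Rightarrow> bool) \<Rightarrow> nat \<Rightarrow> nat" where
  "flipx n x b = (\<Sum>q<n. 2 ^ q * (if qbit b q \<noteq> x q then 1 else 0))"

(* Pauli modulo phases: a pair (x,z) of bit vectors, representative X^x Z^z *)
type_synonym pauli = "(nat \<Rightarrow> bool) \<times> (nat \<Rightarrow> bool)"

definition pvalid :: "nat \<Rightarrow> pauli \<Rightarrow> bool" where
  "pvalid n P = (\<forall>q. n \<le> q \<longrightarrow> \<not> fst P q \<and> \<not> snd P q)"

(* matrix of X^x Z^z on n qubits: X^x Z^z |c> = (-1)^(z.c) |c xor x> *)
definition XZ :: "nat \<Rightarrow> pauli \<Rightarrow> complex mat" where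
  "XZ n P = mat (2 ^ n) (2 ^ n) (\<lambda>(r, c).
      if r = flipx n (fst P) c then (-1) ^ card {q. q < n \<and> snd P q \<and> qbit c q} else 0)"

(* Hermitian Pauli (-1)^s i^(x.z) X^x Z^z, i.e. a signed tensor product of I,X,Y,Z *)
definition herm_pauli :: "nat \<Rightarrow> bool \<Rightarrow> pauli \<Rightarrow> complex mat" where
  "herm_pauli n s P = ((if s then -1 else 1) * \<i> ^ card {q. q < n \<and> fst P q \<and> snd P q}) \<cdot>\<^sub>m XZ n P"

definition adj :: "complex mat \<Rightarrow> complex mat" where
  "adj A = map_mat cnj (transpose_mat A)"

definition unitary_mat :: "nat \<Rightarrow> complex mat \<Rightarrow> bool" where
  "unitary_mat n U = (U \<in> carrier_mat (2 ^ n) (2 ^ n) \<and> U * adj U = 1\<^sub>m (2 ^ n))"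

definition clifford :: "nat \<Rightarrow> complex mat \<Rightarrow> bool" where
  "clifford n U = (unitary_mat n U \<and>
     (\<forall>P. \<exists>c Q. U * XZ n P * adj U = c \<cdot>\<^sub>m XZ n Q))"

definition pcomm :: "nat \<Rightarrow> pauli \<Rightarrow> pauli \<Rightarrow> nat" where
  "pcomm n P Q = (if XZ n P * XZ n Q = XZ n Q * XZ n P then 0 else 1)"

definition pmul :: "pauli \<Rightarrow> pauli \<Rightarrow> pauli" where
  "pmul P Q = ((\<lambda>q. fst P q \<noteq> fst Q q), (\<lambda>q. snd P q \<noteq> snd Q q))"

definition pid :: pauli where
  "pid = ((\<lambda>_. False), (\<lambda>_. False))"

definition pconj :: "nat \<Rightarrow> complex mat \<Rightarrow> pauli \<Rightarrow> pauli" where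
  "pconj n U P = (THE Q. pvalid n Q \<and> (\<exists>c. U * XZ n P * adj U = c \<cdot>\<^sub>m XZ n Q))"

datatype cop = Gate "complex mat" | Meas bool pauli
  (* Meas s P : measurement of the Hermitian Pauli herm_pauli n s P *)

(* a circuit: operations in circuit order, each with its level *)
type_synonym circuit = "(cop \<times> nat) list"

(* support of a gate: qubits on which it does not act as identity,
   i.e. qubits q such that U fails to commute with X_q or Z_q *)
definition single_X :: "nat \<Rightarrow> pauli" where "single_X q = ((\<lambda>p. p = q), (\<lambda>_. False))"
definition single_Z :: "nat \<Rightarrow> pauli" where "single_Z q = ((\<lambda>_. False), (\<lambda>p. p = q))"

fun op_support :: "nat \<Rightarrow> cop \<Rightarrow> nat set" where
  "op_support n (Gate U) = {q. q < n \<and> (U * XZ n (single_X q) \<noteq> XZ n (single_X q) * U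
                                       \<or> U * XZ n (single_Z q) \<noteq> XZ n (single_Z q) * U)}"
| "op_support n (Meas s P) = {q. q < n \<and> (fst P q \<or> snd P q)}"

fun op_wf :: "nat \<Rightarrow> cop \<Rightarrow> bool" where
  "op_wf n (Gate U) = clifford n U"
| "op_wf n (Meas s P) = pvalid n P"

definition wf_circuit :: "nat \<Rightarrow> circuit \<Rightarrow> bool" where
  "wf_circuit n C =
    ((\<forall>(g, l) \<in> set C. op_wf n g \<and> 1 \<le> l) \<and>
     sorted (map snd C) \<and>
     (\<forall>i j. i < j \<and> j < length C \<and> snd (C ! i) = snd (C ! j) \<longrightarrow>
        op_support n (fst (C ! i)) \<inter> op_support n (fst (C ! j)) = {}))"

definition depth :: "circuit \<Rightarrow> nat" where
  "depth C = Max (insert 0 (snd ` set C))"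

fun meas_list :: "circuit \<Rightarrow> (bool \<times> pauli \<times> nat) list" where
  "meas_list [] = []"
| "meas_list ((Gate U, l) # C) = meas_list C"
| "meas_list ((Meas s P, l) # C) = (s, P, l) # meas_list C"

definition num_meas :: "circuit \<Rightarrow> nat" where
  "num_meas C = length (meas_list C)"

definition S_of :: "circuit \<Rightarrow> nat \<Rightarrow> pauli" where
  "S_of C j = fst (snd (meas_list C ! j))"

definition lev :: "circuit \<Rightarrow> nat \<Rightarrow> nat" where
  "lev C j = snd (snd (meas_list C ! j))"

(* U_l: product of the unitary gates of level l (later gates applied after earlier ones) *)
fun Ulev_aux :: "nat \<Rightarrow> circuit \<Rightarrow> nat \<Rightarrow> complex mat \<Rightarrow> complex mat" where
  "Ulev_aux n [] l A = A"
| "Ulev_aux n ((Gate U, l') # C) l A = Ulev_aux n C l (if l' = l then U * A else A)"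
| "Ulev_aux n ((Meas s P, l') # C) l A = Ulev_aux n C l A"

definition Ulev :: "nat \<Rightarrow> circuit \<Rightarrow> nat \<Rightarrow> complex mat" where
  "Ulev n C l = Ulev_aux n C l (1\<^sub>m (2 ^ n))"

definition proj :: "nat \<Rightarrow> bool \<Rightarrow> pauli \<Rightarrow> bool \<Rightarrow> complex mat" where
  "proj n s P ob = (1 / 2 :: complex) \<cdot>\<^sub>m (1\<^sub>m (2 ^ n) + (if ob then -1 else 1) \<cdot>\<^sub>m herm_pauli n s P)"

(* the (unnormalised) operator of the whole circuit conditioned on outcomes os *)
fun kraus :: "nat \<Rightarrow> circuit \<Rightarrow> bool list \<Rightarrow> complex mat" where
  "kraus n [] os = 1\<^sub>m (2 ^ n)"
| "kraus n ((Gate U, l) # C) os = kraus n C os * U"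
| "kraus n ((Meas s P, l) # C) [] = 0\<^sub>m (2 ^ n) (2 ^ n)"
| "kraus n ((Meas s P, l) # C) (ob # os) = kraus n C os * proj n s P ob"

definition vnorm2 :: "complex vec \<Rightarrow> real" where
  "vnorm2 v = (\<Sum>i<dim_vec v. (cmod (v $ i))\<^sup>2)"

definition outcome_prob :: "nat \<Rightarrow> circuit \<Rightarrow> complex vec \<Rightarrow> bool list \<Rightarrow> real" where
  "outcome_prob n C psi os = vnorm2 (kraus n C os *\<^sub>v psi)"

definition outcome_code :: "nat \<Rightarrow> circuit \<Rightarrow> bool list set" where
  "outcome_code n C = {os. length os = num_meas C \<and>
     (\<exists>psi. dim_vec psi = 2 ^ n \<and> vnorm2 psi = 1 \<and> outcome_prob n C psi os > 0)}"

definition linear_code :: "nat \<Rightarrow> bool list set \<Rightarrow> bool" where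
  "linear_code m Cd = (Cd \<subseteq> {w. length w = m} \<and> replicate m False \<in> Cd \<and>
      (\<forall>a\<in>Cd. \<forall>b\<in>Cd. map2 (\<noteq>) a b \<in> Cd))"

definition code_perp :: "nat \<Rightarrow> bool list set \<Rightarrow> bool list set" where
  "code_perp m Cd = {u. length u = m \<and> (\<forall>w\<in>Cd. even (card {j. j < m \<and> u ! j \<and> w ! j}))}"

(* a fault operator: F l is the component on level l + 0.5, l = 0..depth *)
type_synonym fault = "nat \<Rightarrow> pauli"

(* flatten to a Pauli on n*(depth+1) qubits: qubit (l+0.5, q) is index l*n + q *)
definition flat :: "nat \<Rightarrow> fault \<Rightarrow> pauli" where
  "flat n F = ((\<lambda>i. fst (F (i div n)) (i mod n)), (\<lambda>i. snd (F (i div n)) (i mod n)))"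

definition fcomm :: "nat \<Rightarrow> nat \<Rightarrow> fault \<Rightarrow> fault \<Rightarrow> nat" where
  "fcomm n D F G = pcomm (n * (D + 1)) (flat n F) (flat n G)"

(* cumulant: component l + 0.5 *)
fun cum :: "nat \<Rightarrow> circuit \<Rightarrow> fault \<Rightarrow> nat \<Rightarrow> pauli" where
  "cum n C F 0 = F 0"
| "cum n C F (Suc l) = pmul (F (Suc l)) (pconj n (Ulev n C (Suc l)) (cum n C F l))"

(* back-cumulant; bcum_aux k is the component at level (depth - k) + 0.5 *)
fun bcum_aux :: "nat \<Rightarrow> circuit \<Rightarrow> fault \<Rightarrow> nat \<Rightarrow> pauli" where
  "bcum_aux n C F 0 = F (depth C)"
| "bcum_aux n C F (Suc k) = pmul (F (depth C - Suc k))
      (pconj n (adj (Ulev n C (depth C - k))) (bcum_aux n C F k))"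

definition bcum :: "nat \<Rightarrow> circuit \<Rightarrow> fault \<Rightarrow> fault" where
  "bcum n C F l = bcum_aux n C F (depth C - l)"

(* F(u) = prod_j eta_{l_j - 0.5}(S_j^{u_j}) *)
definition Fu :: "circuit \<Rightarrow> bool list \<Rightarrow> fault" where
  "Fu C u l = foldr pmul [S_of C j. j \<leftarrow> [0..<num_meas C], u ! j \<and> lev C j = l + 1] pid"

end

theory Submission
  imports Defs "Jordan_Normal_Form.Determinant"
begin


lemma flipx_Suc: "flipx (Suc n) x b = flipx n x b + 2 ^ n * (if qbit b n \<noteq> x n then 1 else 0)"
  unfolding flipx_def by simp

lemma qbit_add_high:
  assumes s: "s < 2 ^ n" and e: "e \<le> (1::nat)"
  shows "qbit (s + 2 ^ n * e) q = (if q < n then qbit s q else q = n \<and> e = 1)"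
proof (cases "q < n")
  case True
  have "2 ^ n * e = 2 ^ q * (2 ^ (n - q) * e)"
    using True by (simp add: power_add[symmetric])
  moreover have "(s + 2 ^ q * k) div 2 ^ q = s div 2 ^ q + k" for k :: nat by simp
  ultimately have "(s + 2 ^ n * e) div 2 ^ q = s div 2 ^ q + 2 ^ (n - q) * e" by metis
  moreover have "even (2 ^ (n - q) * (e::nat))" using True by simp
  ultimately show ?thesis using True unfolding qbit_def by simp
next
  case False
  show ?thesis
  proof (cases "q = n")
    case True
    have "(s + 2 ^ n * e) div 2 ^ n = e" using s by simp
    then show ?thesis using True e unfolding qbit_def by (cases e) auto
  next
    case False
    then have "n < q" using \<open>\<not> q < n\<close> by simp
    then have "(2::nat) ^ Suc n \<le> 2 ^ q" by (metis Suc_leI one_le_numeral power_increasing)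
    moreover have "s + 2 ^ n * e < 2 ^ Suc n" using s e by (cases e) auto
    ultimately have "(s + 2 ^ n * e) div 2 ^ q = 0" by simp
    then show ?thesis using False \<open>\<not> q < n\<close> unfolding qbit_def by simp
  qed
qed

lemma flipx_props: "flipx n x b < 2 ^ n \<and> (\<forall>q. qbit (flipx n x b) q = (q < n \<and> qbit b q \<noteq> x q))"
proof (induction n)
  case 0
  then show ?case by (simp add: flipx_def qbit_def)
next
  case (Suc n)
  have lt: "flipx n x b < 2 ^ n" using Suc by simp
  have h: "\<And>q. qbit (flipx n x b) q = (q < n \<and> qbit b q \<noteq> x q)" using Suc by blast
  have A: "flipx (Suc n) x b < 2 ^ Suc n" unfolding flipx_Suc using lt by auto
  have B: "qbit (flipx (Suc n) x b) q = (q < Suc n \<and> qbit b q \<noteq> x q)" for q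
  proof -
    have "qbit (flipx (Suc n) x b) q = (if q < n then qbit (flipx n x b) q else q = n \<and> (if qbit b n \<noteq> x n then 1 else 0::nat) = 1)"
      unfolding flipx_Suc by (rule qbit_add_high[OF lt]) simp
    then show "qbit (flipx (Suc n) x b) q = (q < Suc n \<and> qbit b q \<noteq> x q)"
      using h[of q] by (cases "q < n"; cases "q = n") auto
  qed
  show ?case using A B by blast
qed

lemma flipx_lt: "flipx n x b < 2 ^ n" using flipx_props[of n x b] by simp
lemma qbit_flipx: "q < n \<Longrightarrow> qbit (flipx n x b) q = (qbit b q \<noteq> x q)" using flipx_props[of n x b] by simp

lemma qbit_high: "a < 2 ^ n \<Longrightarrow> n \<le> q \<Longrightarrow> \<not> qbit a q"
proof -
  assume "a < 2 ^ n" "n \<le> q"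
  then have "a < 2 ^ q" by (meson order_less_le_trans one_le_numeral power_increasing)
  then show ?thesis unfolding qbit_def by simp
qed

lemma bits_eq: assumes "a < 2 ^ n" "b < 2 ^ n" "\<forall>q<n. qbit a q = qbit b q" shows "a = b"
proof -
  have "bit a q = bit b q" for q
  proof (cases "q < n")
    case True then show ?thesis using assms(3) by (simp add: qbit_def bit_iff_odd)
  next
    case False then show ?thesis using qbit_high[OF assms(1)] qbit_high[OF assms(2)]
      by (simp add: qbit_def bit_iff_odd)
  qed
  then show ?thesis by (simp add: bit_eq_iff)
qed

lemma qbit_0: "\<not> qbit 0 q" by (simp add: qbit_def)
lemma qbit_pow: "qbit (2 ^ p) q = (p = q)"
  by (auto simp add: qbit_def bit_iff_odd[symmetric] bit_exp_iff)

lemma flipx_flipx: assumes "c < 2 ^ n"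
  shows "flipx n x (flipx n y c) = flipx n (\<lambda>q. x q \<noteq> y q) c"
  by (rule bits_eq[where n=n]) (auto simp: flipx_lt qbit_flipx)

lemma flipx_self: assumes "c < 2 ^ n" "\<forall>q<n. \<not> x q" shows "flipx n x c = c"
  by (rule bits_eq[where n=n]) (use assms in \<open>auto simp: flipx_lt qbit_flipx\<close>)



definition sg :: "nat \<Rightarrow> (nat \<Rightarrow> bool) \<Rightarrow> complex" where
  "sg n \<phi> = (\<Prod>q<n. if \<phi> q then -1 else 1)"

lemma sg_card: "(-1::complex) ^ card {q. q < n \<and> \<phi> q} = sg n \<phi>"
proof -
  have "sg n \<phi> = (\<Prod>q\<in>{..<n} \<inter> {q. \<phi> q}. -1) * (\<Prod>q\<in>{..<n} \<inter> - {q. \<phi> q}. 1)"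
    unfolding sg_def by (rule prod.If_cases) simp
  also have "\<dots> = (-1) ^ card ({..<n} \<inter> {q. \<phi> q})" by simp
  also have "{..<n} \<inter> {q. \<phi> q} = {q. q < n \<and> \<phi> q}" by auto
  finally show ?thesis by simp
qed

lemma sg_mult: "sg n \<phi> * sg n \<psi> = sg n (\<lambda>q. \<phi> q \<noteq> \<psi> q)"
  unfolding sg_def prod.distrib[symmetric] by (rule prod.cong) auto

lemma sg_cong: "(\<And>q. q < n \<Longrightarrow> \<phi> q = \<psi> q) \<Longrightarrow> sg n \<phi> = sg n \<psi>"
  unfolding sg_def by (rule prod.cong) auto

lemma sg_sq: "sg n \<phi> * sg n \<phi> = 1"
  by (simp only: sg_mult) (simp add: sg_def)

lemma sg_nz: "sg n \<phi> \<noteq> 0"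
  using sg_sq[of n \<phi>] by auto

lemma sg_false: "sg n (\<lambda>_. False) = 1" by (simp add: sg_def)

lemma XZ_carrier[simp]: "XZ n P \<in> carrier_mat (2 ^ n) (2 ^ n)"
  unfolding XZ_def by simp

lemma XZ_dims[simp]: "dim_row (XZ n P) = 2 ^ n" "dim_col (XZ n P) = 2 ^ n"
  unfolding XZ_def by simp_all

lemma XZ_index: "r < 2 ^ n \<Longrightarrow> c < 2 ^ n \<Longrightarrow>
  XZ n P $$ (r, c) = (if r = flipx n (fst P) c then sg n (\<lambda>q. snd P q \<and> qbit c q) else 0)"
  unfolding XZ_def by (simp add: sg_card)

lemma XZ_mult: "XZ n P * XZ n Q = sg n (\<lambda>q. snd P q \<and> fst Q q) \<cdot>\<^sub>m XZ n (pmul P Q)"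
proof (rule eq_matI)
  fix r c assume r: "r < dim_row (sg n (\<lambda>q. snd P q \<and> fst Q q) \<cdot>\<^sub>m XZ n (pmul P Q))"
    and c: "c < dim_col (sg n (\<lambda>q. snd P q \<and> fst Q q) \<cdot>\<^sub>m XZ n (pmul P Q))"
  then have r: "r < 2 ^ n" and c: "c < 2 ^ n" by auto
  let ?k = "flipx n (fst Q) c"
  have k: "?k < 2 ^ n" by (rule flipx_lt)
  have "(XZ n P * XZ n Q) $$ (r, c) = (\<Sum>k<2 ^ n. XZ n P $$ (r, k) * XZ n Q $$ (k, c))"
    using r c by (simp add: scalar_prod_def lessThan_atLeast0)
  also have "\<dots> = (\<Sum>k<2 ^ n. if k = ?k then XZ n P $$ (r, ?k) * sg n (\<lambda>q. snd Q q \<and> qbit c q) else 0)"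
    by (rule sum.cong) (auto simp: XZ_index c)
  also have "\<dots> = XZ n P $$ (r, ?k) * sg n (\<lambda>q. snd Q q \<and> qbit c q)"
    using k by simp
  also have "\<dots> = (if r = flipx n (fst (pmul P Q)) c then
       sg n (\<lambda>q. snd P q \<and> fst Q q) * sg n (\<lambda>q. snd (pmul P Q) q \<and> qbit c q) else 0)"
  proof -
    have f: "flipx n (fst P) ?k = flipx n (fst (pmul P Q)) c"
      using flipx_flipx[OF c] by (simp add: pmul_def)
    have "sg n (\<lambda>q. snd P q \<and> qbit ?k q) * sg n (\<lambda>q. snd Q q \<and> qbit c q)
        = sg n (\<lambda>q. snd P q \<and> fst Q q) * sg n (\<lambda>q. snd (pmul P Q) q \<and> qbit c q)"
      unfolding sg_mult by (rule sg_cong) (auto simp: qbit_flipx pmul_def)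
    then show ?thesis using r k f by (simp add: XZ_index)
  qed
  also have "\<dots> = (sg n (\<lambda>q. snd P q \<and> fst Q q) \<cdot>\<^sub>m XZ n (pmul P Q)) $$ (r, c)"
    using r c by (simp add: XZ_index)
  finally show "(XZ n P * XZ n Q) $$ (r, c) = (sg n (\<lambda>q. snd P q \<and> fst Q q) \<cdot>\<^sub>m XZ n (pmul P Q)) $$ (r, c)" .
qed auto

lemma XZ_00: "XZ n P $$ (flipx n (fst P) 0, 0) = 1"
  using flipx_lt[of n "fst P" 0] by (simp add: XZ_index qbit_0 sg_false)

lemma XZ_nz: "XZ n P \<noteq> 0\<^sub>m (2 ^ n) (2 ^ n)"
proof
  assume "XZ n P = 0\<^sub>m (2 ^ n) (2 ^ n)"
  then have "XZ n P $$ (flipx n (fst P) 0, 0) = 0" using flipx_lt[of n "fst P" 0] by simp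
  then show False using XZ_00 by simp
qed



lemma adj_carrier[simp]: "A \<in> carrier_mat r c \<Longrightarrow> adj A \<in> carrier_mat c r"
  unfolding adj_def by auto

lemma adj_dims[simp]: "dim_row (adj A) = dim_col A" "dim_col (adj A) = dim_row A"
  unfolding adj_def by auto

lemma adj_adj[simp]: "adj (adj A) = A"
  unfolding adj_def by (rule eq_matI) auto

lemma adj_one[simp]: "adj (1\<^sub>m k) = 1\<^sub>m k"
  unfolding adj_def by (rule eq_matI) auto

lemma adj_mult: assumes "A \<in> carrier_mat a b" "B \<in> carrier_mat b c"
  shows "adj (A * B) = adj B * adj A"
  unfolding adj_def
  by (rule eq_matI) (use assms in \<open>auto simp: scalar_prod_def ac_simps\<close>)

definition unit' :: "nat \<Rightarrow> complex mat \<Rightarrow> bool" where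
  "unit' n U = (U \<in> carrier_mat (2 ^ n) (2 ^ n) \<and> U * adj U = 1\<^sub>m (2 ^ n) \<and> adj U * U = 1\<^sub>m (2 ^ n))"

definition cl :: "nat \<Rightarrow> complex mat \<Rightarrow> bool" where
  "cl n U = (\<forall>P. \<exists>c Q. U * XZ n P * adj U = c \<cdot>\<^sub>m XZ n Q)"

lemma unitary_unit': "unitary_mat n U \<Longrightarrow> unit' n U"
  unfolding unitary_mat_def unit'_def
  using mat_mult_left_right_inverse[of U "2^n" "adj U"] by auto

lemma unit'_adj: "unit' n U \<Longrightarrow> unit' n (adj U)"
  unfolding unit'_def by auto

lemma unit'_one: "unit' n (1\<^sub>m (2 ^ n))"
  unfolding unit'_def by simp

lemma assocN: "A \<in> carrier_mat N N \<Longrightarrow> B \<in> carrier_mat N N \<Longrightarrow> C \<in> carrier_mat N N \<Longrightarrow> A * B * C = A * (B * C)"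
  by (rule assoc_mult_mat)

lemma cN: "A \<in> carrier_mat N N \<Longrightarrow> B \<in> carrier_mat N N \<Longrightarrow> A * B \<in> carrier_mat N N"
  by (rule mult_carrier_mat)

lemma smN: "A \<in> carrier_mat N N \<Longrightarrow> B \<in> carrier_mat N N \<Longrightarrow> A * (k \<cdot>\<^sub>m B) = (k::complex) \<cdot>\<^sub>m (A * B)"
  "A \<in> carrier_mat N N \<Longrightarrow> B \<in> carrier_mat N N \<Longrightarrow> (k \<cdot>\<^sub>m A) * B = (k::complex) \<cdot>\<^sub>m (A * B)"
  by (rule mult_smult_distrib; simp) (rule mult_smult_assoc_mat; simp)

lemma smult_smult_m: "a \<cdot>\<^sub>m (b \<cdot>\<^sub>m A) = (a * b :: complex) \<cdot>\<^sub>m A"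
  by (rule eq_matI) auto

lemma one_smult_m[simp]: "(1::complex) \<cdot>\<^sub>m A = A"
  by (rule eq_matI) auto

lemma unit'D: assumes "unit' n U"
  shows "U \<in> carrier_mat (2^n) (2^n)" "adj U \<in> carrier_mat (2^n) (2^n)"
    "U * adj U = 1\<^sub>m (2^n)" "adj U * U = 1\<^sub>m (2^n)"
    "\<And>X::complex mat. X \<in> carrier_mat (2^n) (2^n) \<Longrightarrow> U * (adj U * X) = X"
    "\<And>X::complex mat. X \<in> carrier_mat (2^n) (2^n) \<Longrightarrow> adj U * (U * X) = X"
proof -
  show U: "U \<in> carrier_mat (2^n) (2^n)" "adj U \<in> carrier_mat (2^n) (2^n)"
    "U * adj U = 1\<^sub>m (2^n)" "adj U * U = 1\<^sub>m (2^n)" using assms unfolding unit'_def by auto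
  fix X :: "complex mat" assume X: "X \<in> carrier_mat (2^n) (2^n)"
  show "U * (adj U * X) = X" using assocN[OF U(1) U(2) X] U X by simp
  show "adj U * (U * X) = X" using assocN[OF U(2) U(1) X] U X by simp
qed

lemma unit'_mult: assumes "unit' n A" "unit' n B" shows "unit' n (A * B)"
proof -
  note A = unit'D[OF assms(1)] and B = unit'D[OF assms(2)]
  have adjm: "adj (A * B) = adj B * adj A" using adj_mult A B by blast
  have 1: "A * B * adj (A * B) = 1\<^sub>m (2^n)"
    unfolding adjm using A B by (simp add: assocN[of _ "2^n"] cN)
  have 2: "adj (A * B) * (A * B) = 1\<^sub>m (2^n)"
    unfolding adjm using A B by (simp add: assocN[of _ "2^n"] cN)
  show ?thesis unfolding unit'_def using 1 2 A B by (auto simp: cN)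
qed

lemma conj_cancel: assumes "unit' n U" "X \<in> carrier_mat (2 ^ n) (2 ^ n)"
  shows "adj U * (U * X * adj U) * U = X" "U * (adj U * X * U) * adj U = X"
  using unit'D[OF assms(1)] assms(2) by (simp_all add: assocN[of _ "2^n"] cN)

lemma conj_smult: fixes c :: complex assumes "U \<in> carrier_mat (2 ^ n) (2 ^ n)" "V \<in> carrier_mat (2 ^ n) (2 ^ n)"
   "X \<in> carrier_mat (2 ^ n) (2 ^ n)"
  shows "U * (c \<cdot>\<^sub>m X) * V = c \<cdot>\<^sub>m (U * X * V)"
  by (subst smN(1)[OF assms(1,3)], rule smN(2)[OF cN[OF assms(1,3)] assms(2)])

lemma conj_mult: assumes "unit' n U" "A \<in> carrier_mat (2 ^ n) (2 ^ n)" "B \<in> carrier_mat (2 ^ n) (2 ^ n)"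
  shows "(U * A * adj U) * (U * B * adj U) = U * (A * B) * adj U"
  using unit'D[OF assms(1)] assms(2,3) by (simp add: assocN[of _ "2^n"] cN)

lemma comm_conj: assumes "unit' n U" "A \<in> carrier_mat (2 ^ n) (2 ^ n)" "B \<in> carrier_mat (2 ^ n) (2 ^ n)"
  shows "((U * A * adj U) * (U * B * adj U) = (U * B * adj U) * (U * A * adj U)) = (A * B = B * A)"
proof
  assume "(U * A * adj U) * (U * B * adj U) = (U * B * adj U) * (U * A * adj U)"
  then have "U * (A * B) * adj U = U * (B * A) * adj U" using conj_mult assms by metis
  then have "adj U * (U * (A * B) * adj U) * U = adj U * (U * (B * A) * adj U) * U" by simp
  then show "A * B = B * A" using conj_cancel(1)[OF assms(1)] assms by (metis cN)
qed (use conj_mult assms in metis)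

lemma comm_smult: assumes "(c::complex) \<noteq> 0" "d \<noteq> 0" "A \<in> carrier_mat k k" "B \<in> carrier_mat k k"
  shows "((c \<cdot>\<^sub>m A) * (d \<cdot>\<^sub>m B) = (d \<cdot>\<^sub>m B) * (c \<cdot>\<^sub>m A)) = (A * B = B * A)"
proof -
  have e1: "(c \<cdot>\<^sub>m A) * (d \<cdot>\<^sub>m B) = (c * d) \<cdot>\<^sub>m (A * B)"
    using assms by (simp add: smN[of _ k] smult_smult_m ac_simps)
  have e2: "(d \<cdot>\<^sub>m B) * (c \<cdot>\<^sub>m A) = (c * d) \<cdot>\<^sub>m (B * A)"
    using assms by (simp add: smN[of _ k] smult_smult_m ac_simps)
  have "((c * d) \<cdot>\<^sub>m (A * B) = (c * d) \<cdot>\<^sub>m (B * A)) = (A * B = B * A)"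
  proof
    assume h: "(c * d) \<cdot>\<^sub>m (A * B) = (c * d) \<cdot>\<^sub>m (B * A)"
    have "(1 / (c * d)) \<cdot>\<^sub>m ((c * d) \<cdot>\<^sub>m (A * B)) = (1 / (c * d)) \<cdot>\<^sub>m ((c * d) \<cdot>\<^sub>m (B * A))"
      using h by simp
    then show "A * B = B * A" using assms by (simp add: smult_smult_m)
  qed simp
  then show ?thesis using e1 e2 by simp
qed



definition trunc :: "nat \<Rightarrow> pauli \<Rightarrow> pauli" where
  "trunc n P = ((\<lambda>q. q < n \<and> fst P q), (\<lambda>q. q < n \<and> snd P q))"

lemma pvalid_trunc: "pvalid n (trunc n P)"
  unfolding pvalid_def trunc_def by auto

lemma flipx_cong: "(\<And>q. q < n \<Longrightarrow> x q = y q) \<Longrightarrow> flipx n x b = flipx n y b"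
  unfolding flipx_def by (rule sum.cong) auto

lemma XZ_trunc: "XZ n (trunc n P) = XZ n P"
proof (rule eq_matI)
  fix i j assume "i < dim_row (XZ n P)" "j < dim_col (XZ n P)"
  then have i: "i < 2^n" and j: "j < 2^n" by auto
  have f: "flipx n (fst (trunc n P)) j = flipx n (fst P) j"
    by (rule flipx_cong) (simp add: trunc_def)
  have s: "sg n (\<lambda>q. snd (trunc n P) q \<and> qbit j q) = sg n (\<lambda>q. snd P q \<and> qbit j q)"
    by (rule sg_cong) (simp add: trunc_def)
  show "XZ n (trunc n P) $$ (i, j) = XZ n P $$ (i, j)"
    using i j f s by (simp add: XZ_index)
qed auto

lemma sg_single: "q < n \<Longrightarrow> sg n (\<lambda>p. z p \<and> qbit (2 ^ q) p) = (if z q then -1 else 1)"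
proof -
  assume q: "q < n"
  have "{p. p < n \<and> z p \<and> qbit (2 ^ q) p} = (if z q then {q} else {})"
    using q by (auto simp: qbit_pow)
  then show ?thesis unfolding sg_card[symmetric] by simp
qed

lemma XZ_unique:
  assumes c: "(c::complex) \<noteq> 0" and v1: "pvalid n Q1" and v2: "pvalid n Q2"
    and e: "c \<cdot>\<^sub>m XZ n Q1 = d \<cdot>\<^sub>m XZ n Q2"
  shows "Q1 = Q2"
proof -
  let ?r = "flipx n (fst Q1) 0"
  have r: "?r < 2^n" by (rule flipx_lt)
  have z: "(0::nat) < 2^n" by simp
  have "(c \<cdot>\<^sub>m XZ n Q1) $$ (?r, 0) = (d \<cdot>\<^sub>m XZ n Q2) $$ (?r, 0)" using e by simp
  then have "c = d * (if ?r = flipx n (fst Q2) 0 then 1 else 0)"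
    using r z by (simp add: XZ_index qbit_0 sg_false)
  then have r2: "?r = flipx n (fst Q2) 0" and cd: "c = d" using c by (auto split: if_splits)
  have fx: "fst Q1 q = fst Q2 q" for q
  proof (cases "q < n")
    case True
    then show ?thesis using r2 qbit_flipx[OF True, of "fst Q1" 0] qbit_flipx[OF True, of "fst Q2" 0]
      by (simp add: qbit_0)
  next
    case False
    then show ?thesis using v1 v2 unfolding pvalid_def by auto
  qed
  then have fxe: "fst Q1 = fst Q2" by auto
  have fz: "snd Q1 q = snd Q2 q" for q
  proof (cases "q < n")
    case True
    let ?c = "(2::nat) ^ q"
    let ?r = "flipx n (fst Q1) ?c"
    have cq: "?c < 2 ^ n" using True by simp
    have rq: "?r < 2 ^ n" by (rule flipx_lt)
    have "(c \<cdot>\<^sub>m XZ n Q1) $$ (?r, ?c) = (d \<cdot>\<^sub>m XZ n Q2) $$ (?r, ?c)" using e by simp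
    then have "c * sg n (\<lambda>p. snd Q1 p \<and> qbit ?c p) = c * sg n (\<lambda>p. snd Q2 p \<and> qbit ?c p)"
      using cq rq fxe cd by (simp add: XZ_index)
    then have "sg n (\<lambda>p. snd Q1 p \<and> qbit ?c p) = sg n (\<lambda>p. snd Q2 p \<and> qbit ?c p)"
      using c by simp
    then show ?thesis using True by (simp add: sg_single split: if_splits)
  next
    case False
    then show ?thesis using v1 v2 unfolding pvalid_def by auto
  qed
  then have "snd Q1 = snd Q2" by auto
  then show ?thesis using fxe by (simp add: prod_eq_iff)
qed

lemma conj_nz:
  assumes "unit' n U" "U * XZ n P * adj U = c \<cdot>\<^sub>m XZ n Q"
  shows "c \<noteq> 0"
proof
  assume c0: "c = 0"
  note u = unit'D[OF assms(1)]
  have "XZ n P = adj U * (U * XZ n P * adj U) * U" using conj_cancel(1)[OF assms(1)] by simp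
  also have "\<dots> = c \<cdot>\<^sub>m (adj U * XZ n Q * U)" unfolding assms(2) by (rule conj_smult[OF u(2) u(1) XZ_carrier])
  finally have e: "XZ n P = c \<cdot>\<^sub>m (adj U * XZ n Q * U)" .
  have r: "flipx n (fst P) 0 < 2^n" by (rule flipx_lt)
  have "XZ n P $$ (flipx n (fst P) 0, 0) = 0"
    unfolding e c0 using r u by simp
  then show False using XZ_00 by simp
qed

lemma pconj_spec:
  assumes u: "unit' n U" and cl: "cl n U"
  shows "pvalid n (pconj n U P) \<and> (\<exists>c. c \<noteq> 0 \<and> U * XZ n P * adj U = c \<cdot>\<^sub>m XZ n (pconj n U P))"
proof -
  obtain c Q where e: "U * XZ n P * adj U = c \<cdot>\<^sub>m XZ n Q" using cl unfolding cl_def by blast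
  have c: "c \<noteq> 0" by (rule conj_nz[OF u e])
  let ?Q = "trunc n Q"
  have e': "U * XZ n P * adj U = c \<cdot>\<^sub>m XZ n ?Q" using e by (simp add: XZ_trunc)
  have "pconj n U P = ?Q"
    unfolding pconj_def
  proof (rule the_equality)
    show "pvalid n ?Q \<and> (\<exists>c. U * XZ n P * adj U = c \<cdot>\<^sub>m XZ n ?Q)" using e' pvalid_trunc by blast
  next
    fix Q' assume "pvalid n Q' \<and> (\<exists>c. U * XZ n P * adj U = c \<cdot>\<^sub>m XZ n Q')"
    then obtain c' where v: "pvalid n Q'" and e2: "U * XZ n P * adj U = c' \<cdot>\<^sub>m XZ n Q'" by blast
    have "c \<cdot>\<^sub>m XZ n ?Q = c' \<cdot>\<^sub>m XZ n Q'" using e' e2 by simp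
    then show "Q' = ?Q" using XZ_unique[OF c pvalid_trunc[of n Q] v] by metis
  qed
  then show ?thesis using e' c pvalid_trunc by auto
qed

lemma cl_one: "cl n (1\<^sub>m (2^n))"
  unfolding cl_def by (metis XZ_carrier adj_one left_mult_one_mat one_smult_m right_mult_one_mat)

lemma cl_mult: assumes "unit' n A" "unit' n B" "cl n A" "cl n B" shows "cl n (A * B)"
  unfolding cl_def
proof
  fix P
  note a = unit'D[OF assms(1)] and b = unit'D[OF assms(2)]
  obtain c Q where e1: "B * XZ n P * adj B = c \<cdot>\<^sub>m XZ n Q" using assms(4) unfolding cl_def by blast
  obtain d R where e2: "A * XZ n Q * adj A = d \<cdot>\<^sub>m XZ n R" using assms(3) unfolding cl_def by blast
  have "A * B * XZ n P * adj (A * B) = A * (B * XZ n P * adj B) * adj A"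
    using a b by (simp add: adj_mult[of _ "2^n" "2^n"] assocN[of _ "2^n"] cN)
  also have "\<dots> = c \<cdot>\<^sub>m (A * XZ n Q * adj A)" unfolding e1 using a by (simp add: conj_smult)
  also have "\<dots> = (c * d) \<cdot>\<^sub>m XZ n R" unfolding e2 by (simp add: smult_smult_m)
  finally show "\<exists>c Q. A * B * XZ n P * adj (A * B) = c \<cdot>\<^sub>m XZ n Q" by blast
qed

lemma finite_pvalid: "finite {P. pvalid n P}"
proof -
  have "{P. pvalid n P} \<subseteq> (\<lambda>(A, B). ((\<lambda>q. q \<in> A), (\<lambda>q. q \<in> B))) ` (Pow {..<n} \<times> Pow {..<n})"
  proof
    fix P assume "P \<in> {P. pvalid n P}"
    then have v: "pvalid n P" by simp
    have "P = (\<lambda>(A, B). ((\<lambda>q. q \<in> A), (\<lambda>q. q \<in> B))) ({q. fst P q}, {q. snd P q})" by simp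
    moreover have "({q. fst P q}, {q. snd P q}) \<in> Pow {..<n} \<times> Pow {..<n}"
      using v unfolding pvalid_def by (auto simp: not_le[symmetric])
    ultimately show "P \<in> (\<lambda>(A, B). ((\<lambda>q. q \<in> A), (\<lambda>q. q \<in> B))) ` (Pow {..<n} \<times> Pow {..<n})"
      by blast
  qed
  then show ?thesis by (rule finite_subset) simp
qed

lemma cl_adj: assumes u: "unit' n U" and cl: "cl n U" shows "cl n (adj U)"
proof -
  let ?V = "{P. pvalid n P}"
  let ?f = "pconj n U"
  note uu = unit'D[OF u]
  have sub: "?f ` ?V \<subseteq> ?V" using pconj_spec[OF u cl] by auto
  have inj: "inj_on ?f ?V"
  proof (rule inj_onI)
    fix P1 P2 assume p1: "P1 \<in> ?V" and p2: "P2 \<in> ?V" and eq: "?f P1 = ?f P2"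
    obtain c1 where c1: "c1 \<noteq> 0" "U * XZ n P1 * adj U = c1 \<cdot>\<^sub>m XZ n (?f P1)" using pconj_spec[OF u cl] by blast
    obtain c2 where c2: "c2 \<noteq> 0" "U * XZ n P2 * adj U = c2 \<cdot>\<^sub>m XZ n (?f P1)" using pconj_spec[OF u cl] eq by metis
    have "c2 \<cdot>\<^sub>m (U * XZ n P1 * adj U) = c1 \<cdot>\<^sub>m (U * XZ n P2 * adj U)"
      unfolding c1 c2 by (simp add: smult_smult_m ac_simps)
    then have "adj U * (c2 \<cdot>\<^sub>m (U * XZ n P1 * adj U)) * U = adj U * (c1 \<cdot>\<^sub>m (U * XZ n P2 * adj U)) * U"
      by simp
    then have "c2 \<cdot>\<^sub>m XZ n P1 = c1 \<cdot>\<^sub>m XZ n P2"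
      using uu by (simp add: conj_smult cN conj_cancel(1)[OF u])
    then show "P1 = P2" using XZ_unique[OF c2(1)] p1 p2 by simp
  qed
  have surj: "?f ` ?V = ?V" by (rule endo_inj_surj[OF finite_pvalid sub inj])
  show ?thesis unfolding cl_def
  proof
    fix Q
    have "trunc n Q \<in> ?V" using pvalid_trunc by simp
    then obtain P where P: "P \<in> ?V" "?f P = trunc n Q" using surj by (metis imageE)
    obtain c where c: "c \<noteq> 0" "U * XZ n P * adj U = c \<cdot>\<^sub>m XZ n (trunc n Q)" using pconj_spec[OF u cl] P(2) by metis
    have "adj U * XZ n Q * adj (adj U) = adj U * XZ n (trunc n Q) * U" by (simp add: XZ_trunc)
    also have "\<dots> = (1 / c) \<cdot>\<^sub>m (adj U * (c \<cdot>\<^sub>m XZ n (trunc n Q)) * U)"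
      using c(1) by (simp add: conj_smult[OF uu(2) uu(1) XZ_carrier] smult_smult_m)
    also have "\<dots> = (1 / c) \<cdot>\<^sub>m XZ n P" unfolding c(2)[symmetric] using conj_cancel(1)[OF u] by simp
    finally show "\<exists>c Q'. adj U * XZ n Q * adj (adj U) = c \<cdot>\<^sub>m XZ n Q'" by blast
  qed
qed

definition good :: "nat \<Rightarrow> complex mat \<Rightarrow> bool" where
  "good n U = (unit' n U \<and> cl n U \<and> cl n (adj U))"

lemma clifford_good: "clifford n U \<Longrightarrow> good n U"
  unfolding clifford_def good_def
  using unitary_unit' cl_adj cl_def by metis

lemma good_one: "good n (1\<^sub>m (2^n))"
  unfolding good_def using unit'_one cl_one by simp

lemma good_mult: assumes "good n A" "good n B" shows "good n (A * B)"
proof -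
  have u: "unit' n A" "unit' n B" "cl n A" "cl n B" "cl n (adj A)" "cl n (adj B)"
    using assms unfolding good_def by auto
  have "adj (A * B) = adj B * adj A" using unit'D(1)[OF u(1)] unit'D(1)[OF u(2)] by (simp add: adj_mult)
  then show ?thesis unfolding good_def
    using unit'_mult[OF u(1,2)] cl_mult[OF u(1,2,3,4)] cl_mult[OF unit'_adj[OF u(2)] unit'_adj[OF u(1)] u(6,5)]
    by simp
qed

lemma good_adj: "good n U \<Longrightarrow> good n (adj U)"
  unfolding good_def using unit'_adj by auto

definition comm :: "complex mat \<Rightarrow> complex mat \<Rightarrow> bool" where
  "comm A B = (A * B = B * A)"

lemma pcomm_comm: "pcomm n P Q = (if comm (XZ n P) (XZ n Q) then 0 else 1)"
  unfolding pcomm_def comm_def by simp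

lemma pconj_adjoint:
  assumes g: "good n U"
  shows "pcomm n P (pconj n (adj U) Q) = pcomm n (pconj n U P) Q"
proof -
  have u: "unit' n U" "cl n U" "cl n (adj U)" using g unfolding good_def by auto
  note uu = unit'D[OF u(1)]
  obtain c where c: "c \<noteq> 0" "adj U * XZ n Q * U = c \<cdot>\<^sub>m XZ n (pconj n (adj U) Q)"
    using pconj_spec[OF unit'_adj[OF u(1)] u(3), of Q] by auto
  obtain d where d: "d \<noteq> 0" "U * XZ n P * adj U = d \<cdot>\<^sub>m XZ n (pconj n U P)"
    using pconj_spec[OF u(1,2), of P] by auto
  let ?Q' = "pconj n (adj U) Q" and ?P' = "pconj n U P"
  have "comm (XZ n P) (XZ n ?Q') = comm (1 \<cdot>\<^sub>m XZ n P) (c \<cdot>\<^sub>m XZ n ?Q')"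
    unfolding comm_def using comm_smult[of 1 c "XZ n P" "2^n" "XZ n ?Q'"] c by simp
  also have "\<dots> = comm (XZ n P) (adj U * XZ n Q * U)" unfolding c(2)[symmetric] by simp
  also have "\<dots> = comm (U * XZ n P * adj U) (U * (adj U * XZ n Q * U) * adj U)"
    unfolding comm_def using comm_conj[OF u(1), of "XZ n P" "adj U * XZ n Q * U"] uu by (simp add: cN)
  also have "\<dots> = comm (d \<cdot>\<^sub>m XZ n ?P') (1 \<cdot>\<^sub>m XZ n Q)"
    unfolding d(2) using conj_cancel(2)[OF u(1)] by simp
  also have "\<dots> = comm (XZ n ?P') (XZ n Q)"
    unfolding comm_def using comm_smult[of d 1 "XZ n ?P'" "2^n" "XZ n Q"] d by simp
  finally show ?thesis unfolding pcomm_comm by simp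
qed



definition omg :: "nat \<Rightarrow> pauli \<Rightarrow> pauli \<Rightarrow> nat" where
  "omg n P Q = (\<Sum>q<n. of_bool (fst P q \<and> snd Q q) + of_bool (snd P q \<and> fst Q q))"

lemma sg_pow: "sg n \<phi> = (-1) ^ (\<Sum>q<n. of_bool (\<phi> q) :: nat)"
  by (induction n) (auto simp: sg_def power_add)

lemma pmul_comm: "pmul P Q = pmul Q P"
  unfolding pmul_def by auto

lemma pcomm_sym: "pcomm n P Q = omg n P Q mod 2"
proof -
  let ?a = "sg n (\<lambda>q. snd P q \<and> fst Q q)" and ?b = "sg n (\<lambda>q. snd Q q \<and> fst P q)"
  let ?M = "XZ n (pmul P Q)"
  have e1: "XZ n P * XZ n Q = ?a \<cdot>\<^sub>m ?M" by (rule XZ_mult)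
  have e2: "XZ n Q * XZ n P = ?b \<cdot>\<^sub>m ?M" using XZ_mult[of n Q P] pmul_comm by metis
  have r: "flipx n (fst (pmul P Q)) 0 < 2 ^ n" by (rule flipx_lt)
  have "comm (XZ n P) (XZ n Q) = (?a = ?b)"
  proof
    assume "comm (XZ n P) (XZ n Q)"
    then have "?a \<cdot>\<^sub>m ?M = ?b \<cdot>\<^sub>m ?M" unfolding comm_def e1 e2 .
    then have "(?a \<cdot>\<^sub>m ?M) $$ (flipx n (fst (pmul P Q)) 0, 0) = (?b \<cdot>\<^sub>m ?M) $$ (flipx n (fst (pmul P Q)) 0, 0)"
      by simp
    then show "?a = ?b" using r XZ_00[of n "pmul P Q"] by simp
  qed (simp add: comm_def e1 e2)
  also have "\<dots> = (?a * ?b = 1)"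
  proof
    have bb: "?b * ?b = 1" by (rule sg_sq)
    show "?a = ?b \<Longrightarrow> ?a * ?b = 1" using bb by simp
    assume h: "?a * ?b = 1"
    have "?a = ?a * (?b * ?b)" using bb by simp
    also have "\<dots> = (?a * ?b) * ?b" by (simp add: mult.assoc)
    finally show "?a = ?b" using h by simp
  qed
  also have "?a * ?b = (-1) ^ omg n P Q"
  proof -
    have s: "(\<Sum>q<n. of_bool (snd P q \<and> fst Q q) + of_bool (snd Q q \<and> fst P q)) = omg n P Q"
      unfolding omg_def by (rule sum.cong) auto
    show ?thesis by (simp only: sg_pow power_add[symmetric] sum.distrib[symmetric] s)
  qed
  also have "((-1::complex) ^ omg n P Q = 1) = even (omg n P Q)"
    by (simp add: minus_one_power_iff)
  finally have "comm (XZ n P) (XZ n Q) = even (omg n P Q)" .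
  then have "pcomm n P Q = (if even (omg n P Q) then 0 else 1)" unfolding pcomm_comm by simp
  then show ?thesis by (simp add: mod2_eq_if)
qed

lemma sym_comm: "omg n P Q = omg n Q P"
  unfolding omg_def by (rule sum.cong) auto

lemma sym_pid: "omg n P pid = 0"
  unfolding omg_def pid_def by simp

lemma sym_pmul_exact:
  "omg n P (pmul Q R) + 2 * (\<Sum>q<n. of_bool (fst P q \<and> snd Q q \<and> snd R q) + of_bool (snd P q \<and> fst Q q \<and> fst R q))
   = omg n P Q + omg n P R"
  unfolding omg_def sum.distrib[symmetric] sum_distrib_left
  by (rule sum.cong) (auto simp: pmul_def)

lemma sym_pmul: "omg n P (pmul Q R) mod 2 = (omg n P Q + omg n P R) mod 2"
  by (simp add: sym_pmul_exact[symmetric])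

lemma sym_pmul1: "omg n (pmul Q R) P mod 2 = (omg n Q P + omg n R P) mod 2"
  using sym_pmul[of n P Q R] by (simp only: sym_comm[of n P])

lemma sym_foldr: "omg n A (foldr pmul xs pid) mod 2 = (\<Sum>x\<leftarrow>xs. omg n A x) mod 2"
proof (induction xs)
  case Nil
  then show ?case by (simp add: sym_pid)
next
  case (Cons x xs)
  have "omg n A (foldr pmul (x # xs) pid) mod 2 = (omg n A x + omg n A (foldr pmul xs pid)) mod 2"
    by (simp add: sym_pmul)
  also have "\<dots> = (omg n A x + (\<Sum>x\<leftarrow>xs. omg n A x)) mod 2"
    by (rule mod_add_cong[OF refl Cons.IH])
  finally show ?case by simp
qed

lemma sum_mod2_cong: "(\<And>i. i \<in> A \<Longrightarrow> f i mod 2 = g i mod 2) \<Longrightarrow> sum f A mod 2 = (sum g A :: nat) mod 2"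
proof -
  assume h: "\<And>i. i \<in> A \<Longrightarrow> f i mod 2 = g i mod 2"
  have "sum f A mod 2 = (\<Sum>i\<in>A. f i mod 2) mod 2" by (rule mod_sum_eq[symmetric])
  also have "(\<Sum>i\<in>A. f i mod 2) = (\<Sum>i\<in>A. g i mod 2)" by (rule sum.cong) (use h in auto)
  also have "(\<Sum>i\<in>A. g i mod 2) mod 2 = sum g A mod 2" by (rule mod_sum_eq)
  finally show ?thesis .
qed

lemma sum_shift: "(\<Sum>i<m + j. g i) = (\<Sum>i<m. g i) + (\<Sum>q<j. g (m + q :: nat)) "
  by (induction j) (auto simp: add.assoc)

lemma sum_divmod: fixes n k :: nat shows "(\<Sum>i<n * k. h (i div n) (i mod n)) = (\<Sum>l<k. \<Sum>q<n. h l q :: nat)"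
proof (cases "n = 0")
  case True then show ?thesis by simp
next
  case False
  show ?thesis
  proof (induction k)
    case 0 then show ?case by simp
  next
    case (Suc k)
    have "(\<Sum>i<n * Suc k. h (i div n) (i mod n)) = (\<Sum>i<n * k + n. h (i div n) (i mod n))"
      by (simp add: add.commute)
    also have "\<dots> = (\<Sum>i<n * k. h (i div n) (i mod n)) + (\<Sum>q<n. h ((n * k + q) div n) ((n * k + q) mod n))"
      by (rule sum_shift)
    also have "(\<Sum>q<n. h ((n * k + q) div n) ((n * k + q) mod n)) = (\<Sum>q<n. h k q)"
      by (rule sum.cong) (use False in auto)
    finally show ?case using Suc by simp
  qed
qed

lemma fcomm_sum: "fcomm n D F G = (\<Sum>l\<le>D. omg n (F l) (G l)) mod 2"
proof -
  have e1: "omg (n * (D + 1)) (flat n F) (flat n G) = (\<Sum>l<D + 1. omg n (F l) (G l))"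
    unfolding omg_def flat_def
    using sum_divmod[of "\<lambda>l q. of_bool (fst (F l) q \<and> snd (G l) q) + of_bool (snd (F l) q \<and> fst (G l) q)" n "D + 1"]
    by simp
  have st: "{..<D + 1} = {..D}" by auto
  have e2: "(\<Sum>l<D + 1. omg n (F l) (G l)) = (\<Sum>l\<le>D. omg n (F l) (G l))" by (simp only: st)
  show ?thesis unfolding fcomm_def pcomm_sym e1 e2 by (rule refl)
qed



lemma meas_list_in: "(s, P, l) \<in> set (meas_list C) \<Longrightarrow> (Meas s P, l) \<in> set C"
  by (induction C rule: meas_list.induct) auto

lemma Ulev_aux_good:
  assumes "\<And>U l'. (Gate U, l') \<in> set C \<Longrightarrow> clifford n U" "good n A"
  shows "good n (Ulev_aux n C l A)"
  using assms
proof (induction n C l A rule: Ulev_aux.induct)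
  case (1 n l A) then show ?case by simp
next
  case (2 n U l' C l A)
  have cU: "clifford n U" using 2(2)[of U l'] by simp
  have "good n (if l' = l then U * A else A)"
    using good_mult[OF clifford_good[OF cU] 2(3)] 2(3) by simp
  moreover have "\<And>U l'. (Gate U, l') \<in> set C \<Longrightarrow> clifford n U" using 2(2) by (metis list.set_intros(2))
  ultimately have "good n (Ulev_aux n C l (if l' = l then U * A else A))" using 2(1) by blast
  then show ?case by simp
next
  case (3 n s P l' C l A) then show ?case by simp
qed

lemma Ulev_good: "wf_circuit n C \<Longrightarrow> good n (Ulev n C l)"
  unfolding Ulev_def
  by (rule Ulev_aux_good) (auto simp: wf_circuit_def good_one)

lemma pmul_cancel: "pmul (pmul a b) b = a"
  unfolding pmul_def by (auto simp: prod_eq_iff fun_eq_iff)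

lemma bcum_top: "bcum n C G (depth C) = G (depth C)"
  unfolding bcum_def by simp

lemma bcum_lt: assumes "l < depth C"
  shows "bcum n C G l = pmul (G l) (pconj n (adj (Ulev n C (Suc l))) (bcum n C G (Suc l)))"
proof -
  let ?D = "depth C"
  have e: "?D - l = Suc (?D - Suc l)" using assms by simp
  have e2: "?D - Suc (?D - Suc l) = l" "?D - (?D - Suc l) = Suc l" using assms by auto
  show ?thesis unfolding bcum_def e bcum_aux.simps e2 ..
qed

lemma listcomp_filter: "[f x. x \<leftarrow> xs, P x] = map f (filter P xs)"
  by (induction xs) auto

lemma sum_list_filter_upt: "sum_list (map g (filter P [0..<m])) = (\<Sum>j<m. if P j then g j else (0::nat))"
  by (induction m) auto



theorem mainTheorem19:
  fixes n :: nat and C :: circuit and F :: fault and u :: "bool list"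
  assumes "wf_circuit n C"
    and "linear_code (num_meas C) (outcome_code n C)"
    and "u \<in> code_perp (num_meas C) (outcome_code n C)"
  shows "(\<Sum>j<num_meas C. if u ! j then pcomm n (cum n C F (lev C j - 1)) (S_of C j) else 0) mod 2
           = fcomm n (depth C) F (bcum n C (Fu C u))"
proof -
  let ?m = "num_meas C" and ?D = "depth C"
  define A where "A = cum n C F"
  define G where "G = Fu C u"
  define B where "B = bcum n C G"
  define X where "X l = pconj n (Ulev n C (Suc l)) (A l)" for l
  define Y where "Y l = pconj n (adj (Ulev n C (Suc l))) (B (Suc l))" for l
  have wf: "wf_circuit n C" by fact
  have lev: "1 \<le> lev C j \<and> lev C j \<le> ?D" if j: "j < ?m" for j
  proof -
    have "meas_list C ! j \<in> set (meas_list C)" using j unfolding num_meas_def by simp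
    then have "(fst (meas_list C ! j), S_of C j, lev C j) \<in> set (meas_list C)"
      unfolding S_of_def lev_def by simp
    then have inC: "(Meas (fst (meas_list C ! j)) (S_of C j), lev C j) \<in> set C"
      by (rule meas_list_in)
    then have "1 \<le> lev C j" using wf unfolding wf_circuit_def by fastforce
    moreover have "lev C j \<le> ?D" unfolding depth_def
      by (rule Max_ge) (use inC in force)+
    ultimately show ?thesis by simp
  qed
  have s1a: "(\<Sum>j<?m. if u ! j then pcomm n (A (lev C j - 1)) (S_of C j) else 0) mod 2
      = (\<Sum>j<?m. if u ! j then omg n (A (lev C j - 1)) (S_of C j) else 0) mod 2"
    by (rule sum_mod2_cong) (simp add: pcomm_sym)
  have inner: "(\<Sum>l\<le>?D. if u ! j \<and> lev C j = l + 1 then omg n (A l) (S_of C j) else 0)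
      = (if u ! j then omg n (A (lev C j - 1)) (S_of C j) else 0)" if j: "j < ?m" for j
  proof (cases "u ! j")
    case True
    have c: "(u ! j \<and> lev C j = l + 1) = (l = lev C j - 1)" for l using lev[OF j] True by auto
    have "(\<Sum>l\<le>?D. if u ! j \<and> lev C j = l + 1 then omg n (A l) (S_of C j) else 0)
        = (\<Sum>l\<le>?D. if l = lev C j - 1 then omg n (A l) (S_of C j) else 0)"
      by (rule sum.cong) (simp_all only: c)
    also have "\<dots> = omg n (A (lev C j - 1)) (S_of C j)"
    proof -
      have le: "lev C j - 1 \<le> ?D" using lev[OF j] by linarith
      then show ?thesis by (simp add: sum.delta)
    qed
    finally show ?thesis using True by simp
  qed simp
  have s1b: "(\<Sum>l\<le>?D. omg n (A l) (G l)) mod 2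
      = (\<Sum>l\<le>?D. \<Sum>j<?m. if u ! j \<and> lev C j = l + 1 then omg n (A l) (S_of C j) else 0) mod 2"
  proof (rule sum_mod2_cong)
    fix l
    have "omg n (A l) (G l) mod 2
        = (\<Sum>x\<leftarrow>map (S_of C) (filter (\<lambda>j. u ! j \<and> lev C j = l + 1) [0..<?m]). omg n (A l) x) mod 2"
      unfolding G_def Fu_def listcomp_filter by (rule sym_foldr)
    also have "(\<Sum>x\<leftarrow>map (S_of C) (filter (\<lambda>j. u ! j \<and> lev C j = l + 1) [0..<?m]). omg n (A l) x)
        = (\<Sum>j<?m. if u ! j \<and> lev C j = l + 1 then omg n (A l) (S_of C j) else 0)"
      unfolding map_map comp_def by (rule sum_list_filter_upt)
    finally show "omg n (A l) (G l) mod 2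
        = (\<Sum>j<?m. if u ! j \<and> lev C j = l + 1 then omg n (A l) (S_of C j) else 0) mod 2" .
  qed
  have s1c: "(\<Sum>l\<le>?D. \<Sum>j<?m. if u ! j \<and> lev C j = l + 1 then omg n (A l) (S_of C j) else 0)
      = (\<Sum>j<?m. if u ! j then omg n (A (lev C j - 1)) (S_of C j) else 0)"
    by (subst sum.swap) (rule sum.cong[OF refl], rule inner, simp)
  have step1: "(\<Sum>j<?m. if u ! j then pcomm n (A (lev C j - 1)) (S_of C j) else 0) mod 2
      = (\<Sum>l\<le>?D. omg n (A l) (G l)) mod 2"
    using s1a s1b s1c by simp
  define T1 where "T1 l = omg n (A l) (B l)" for l
  define T2 where "T2 l = (if l < ?D then omg n (A l) (Y l) else 0)" for l
  define T3 where "T3 l = (case l of 0 \<Rightarrow> 0 | Suc k \<Rightarrow> omg n (X k) (B (Suc k)))" for l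
  have a: "omg n (A l) (G l) mod 2 = (T1 l + T2 l) mod 2" if l: "l \<in> {..?D}" for l
  proof (cases "l < ?D")
    case True
    have "B l = pmul (G l) (Y l)" unfolding B_def Y_def using bcum_lt[OF True] by simp
    then have "G l = pmul (B l) (Y l)" using pmul_cancel by metis
    then show ?thesis unfolding T1_def T2_def using True by (simp add: sym_pmul)
  next
    case False
    then have "l = ?D" using l by simp
    then have "G l = B l" unfolding B_def using bcum_top by metis
    then show ?thesis unfolding T1_def T2_def using False by simp
  qed
  have b: "omg n (F l) (B l) mod 2 = (T1 l + T3 l) mod 2" for l
  proof (cases l)
    case 0
    then show ?thesis unfolding T1_def T3_def A_def by simp
  next
    case (Suc k)
    have "A (Suc k) = pmul (F (Suc k)) (X k)" unfolding A_def X_def by simp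
    then have "F (Suc k) = pmul (A (Suc k)) (X k)" using pmul_cancel by metis
    then show ?thesis unfolding T1_def T3_def Suc by (simp add: sym_pmul1)
  qed
  have adjt: "omg n (A l) (Y l) mod 2 = omg n (X l) (B (Suc l)) mod 2" for l
    unfolding X_def Y_def pcomm_sym[symmetric] by (rule pconj_adjoint[OF Ulev_good[OF wf]])
  have atm: "{..?D} = {..<Suc ?D}" by auto
  have c2: "(\<Sum>l\<le>?D. T2 l) = (\<Sum>l<?D. omg n (A l) (Y l))"
    unfolding atm sum.lessThan_Suc T2_def by simp
  have c3: "(\<Sum>l\<le>?D. T3 l) = (\<Sum>l<?D. omg n (X l) (B (Suc l)))"
    unfolding atm sum.lessThan_Suc_shift T3_def by simp
  have c: "(\<Sum>l\<le>?D. T2 l) mod 2 = (\<Sum>l\<le>?D. T3 l) mod 2"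
    unfolding c2 c3 by (rule sum_mod2_cong) (rule adjt)
  have "(\<Sum>l\<le>?D. omg n (A l) (G l)) mod 2 = (\<Sum>l\<le>?D. T1 l + T2 l) mod 2"
    by (rule sum_mod2_cong) (rule a)
  also have "\<dots> = ((\<Sum>l\<le>?D. T1 l) + (\<Sum>l\<le>?D. T2 l)) mod 2" by (simp add: sum.distrib)
  also have "\<dots> = ((\<Sum>l\<le>?D. T1 l) + (\<Sum>l\<le>?D. T3 l)) mod 2" by (rule mod_add_cong[OF refl c])
  also have "\<dots> = (\<Sum>l\<le>?D. T1 l + T3 l) mod 2" by (simp add: sum.distrib)
  also have "\<dots> = (\<Sum>l\<le>?D. omg n (F l) (B l)) mod 2"
    by (rule sum_mod2_cong) (simp add: b)
  also have "\<dots> = fcomm n ?D F B" by (rule fcomm_sum[symmetric])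
  finally have step2: "(\<Sum>l\<le>?D. omg n (A l) (G l)) mod 2 = fcomm n ?D F B" .
  show ?thesis using step1 step2 unfolding A_def B_def G_def by simp
qed

end
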